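(* For $\lambda\in(0,1)$ and $t\in(0,1)\cup(1,\infty)$ define $\kappa_\lambda(t)=\frac{m_\lambda(t)}{\mathrm{hel}(t)}$. Then for every such $t$ and $\lambda$: (i) $\kappa_\lambda(t)=\kappa_{1-\lambda}(1/t)$; (ii) $L(\lambda)\le\kappa_\lambda(t)\le U(\lambda)$.
   Context: $m_\lambda(t)=\lambda t\ln t-(\lambda t+1-\lambda)\ln(\lambda t+1-\lambda)$ and $\mathrm{hel}(t)=\frac12(\sqrt t-1)^2$ for $t>0$. With $\eta(\lambda)=-\lambda\ln\lambda$, define $L(\lambda)=2\min\{\eta(\lambda),\eta(1-\lambda)\}$ and $U(\lambda)=\frac{2\lambda(1-\lambda)}{1-2\lambda}\ln\frac{1-\lambda}{\lambda}$ for $\lambda\neq 1/2$, with $U(1/2)=1$ (its continuous extension). *)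

theory Defs
  imports Complex_Main
begin

definition m_fun :: "real \<Rightarrow> real \<Rightarrow> real" where
  "m_fun l t = l * t * ln t - (l * t + 1 - l) * ln (l * t + 1 - l)"

definition hel :: "real \<Rightarrow> real" where
  "hel t = (1/2) * (sqrt t - 1)^2"

definition eta :: "real \<Rightarrow> real" where
  "eta l = - l * ln l"

definition L_bound :: "real \<Rightarrow> real" where
  "L_bound l = 2 * min (eta l) (eta (1 - l))"

definition U_bound :: "real \<Rightarrow> real" where
  "U_bound l = (if l = 1/2 then 1
     else (2 * l * (1 - l)) / (1 - 2 * l) * ln ((1 - l) / l))"

definition kappa :: "real \<Rightarrow> real \<Rightarrow> real" where
  "kappa l t = m_fun l t / hel t"

end

theory Submission
  imports Defs "HOL-Analysis.Analysis"
begin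


definition qq :: "real \<Rightarrow> real \<Rightarrow> real" where "qq l s = l  *  s ^ 2 + 1 - l"
definition MM where "MM l s = 2 * l * s ^ 2 * ln s - qq l s  *  ln (qq l s)"
definition M1 where "M1 l s = 2 * l * s * (2 * ln s - ln (qq l s))"
definition M2 where "M2 l s = 2 * l * (2 * ln s - ln (qq l s)) + 4 * l * (1-l)/qq l s"
definition M3 where "M3 l s = 4 * l * (1-l) * (1-l-l * s ^ 2)/(s * (qq l s) ^ 2)"

lemma qq_pos: "0 < l \<Longrightarrow> l < 1 \<Longrightarrow> 0 < qq l s"
  unfolding qq_def by (smt (verit) mult_nonneg_nonneg zero_le_power2)

lemma dM: assumes "0<l" "l<1" "0<s" shows "(MM l has_real_derivative M1 l s) (at s)"
proof -
  have q: "0 < qq l s" using qq_pos assms by auto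
  have "((\<lambda>s. 2 * l * s ^ 2 * ln s - (l * s ^ 2 + 1 - l) * ln (l * s ^ 2 + 1 - l)) has_real_derivative
     2 * l * (2 * s) * ln s + 2 * l * s ^ 2 * (1/s) - ((l * (2 * s)) * ln (qq l s) + qq l s * ((l * (2 *  s)) / qq l s))) (at s)"
    using q assms unfolding qq_def
    by (auto intro!: derivative_eq_intros simp: power2_eq_square)
  moreover have "2 * l * (2 * s) * ln s + 2 * l * s ^ 2 * (1/s) - ((l * (2 * s)) * ln (qq l s) + qq l s * ((l * (2 *  s)) / qq l s)) = M1 l s"
    using q assms unfolding M1_def by (simp add: field_simps power2_eq_square)
  ultimately show ?thesis unfolding MM_def qq_def[abs_def] by simp
qed

lemma dM1: assumes "0<l" "l<1" "0<s" shows "(M1 l has_real_derivative M2 l s) (at s)"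
proof -
  have q: "0 < qq l s" using qq_pos assms by auto
  have "((\<lambda>s. 2 * l * s * (2 * ln s - ln (l * s ^ 2 + 1 - l))) has_real_derivative
     2 * l * (2 * ln s - ln (qq l s)) + 2 * l * s * (2 * (1 / s) - (l * (2 * s)) / qq l s)) (at s)"
    using q assms unfolding qq_def
    by (auto intro!: derivative_eq_intros simp: power2_eq_square)
  moreover have "2 * l * (2 * ln s - ln (qq l s)) + 2 * l * s * (2 * (1 / s) - (l * (2 * s)) / qq l s) = M2 l s"
  proof -
    have e: "1 - l = qq l s - l * s ^ 2" by (simp add: qq_def)
    show ?thesis using q assms unfolding M2_def e by (simp add: field_simps power2_eq_square)
  qed
  ultimately show ?thesis unfolding M1_def qq_def[abs_def] by simp
qed

lemma dM2: assumes "0<l" "l<1" "0<s" shows "(M2 l has_real_derivative M3 l s) (at s)"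
proof -
  have q: "0 < qq l s" using qq_pos assms by auto
  have "((\<lambda>s. 2 * l * (2 * ln s - ln (l * s ^ 2 + 1 - l)) + 4 * l * (1 - l) / (l * s ^ 2 + 1 - l)) has_real_derivative
     2 * l * (2 * (1 / s) - (l * (2 * s)) / qq l s) - 4 * l * (1 - l) * (l * (2 * s)) / (qq l s) ^ 2) (at s)"
    using q assms unfolding qq_def
    apply (auto intro!: derivative_eq_intros simp: power2_eq_square mult_ac)
    done
  moreover have "2 * l * (2 * (1 / s) - (l * (2 * s)) / qq l s) - 4 * l * (1 - l) * (l * (2 * s)) / (qq l s) ^ 2 = M3 l s"
  proof -
    have e: "1 - l = qq l s - l * s ^ 2" by (simp add: qq_def)
    show ?thesis using q assms unfolding M3_def e by (simp add: field_simps power2_eq_square)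
  qed
  ultimately show ?thesis unfolding M2_def qq_def[abs_def] by simp
qed

definition NN where "NN l s = (s - 1) * M1 l s - 2 * MM l s"
definition N1 where "N1 l s = (s - 1) * M2 l s - M1 l s"
definition N2 where "N2 l s = (s - 1) * M3 l s"

lemma dN: assumes "0<l" "l<1" "0<s" shows "(NN l has_real_derivative N1 l s) (at s)"
proof -
  have "((\<lambda>s. (s - 1) * M1 l s - 2 * MM l s) has_real_derivative 1 * M1 l s + (s - 1) * M2 l s - 2 * M1 l s) (at s)"
    by (auto intro!: derivative_eq_intros dM dM1 assms)
  then show ?thesis unfolding NN_def[abs_def] N1_def by simp
qed

lemma dN1: assumes "0<l" "l<1" "0<s" shows "(N1 l has_real_derivative N2 l s) (at s)"
proof -
  have "((\<lambda>s. (s - 1) * M2 l s - M1 l s) has_real_derivative 1 * M2 l s + (s - 1) * M3 l s - M2 l s) (at s)"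
    by (auto intro!: derivative_eq_intros dM2 dM1 assms)
  then show ?thesis unfolding N1_def[abs_def] N2_def by simp
qed

lemma vals: "qq l 1 = 1" "MM l 1 = 0" "M1 l 1 = 0" "M2 l 1 = 4 * l * (1 - l)" "NN l 1 = 0" "N1 l 1 = 0"
  by (simp_all add: qq_def MM_def M1_def M2_def NN_def N1_def)

lemma M3_nonneg: assumes "0<l" "l<1" "0<s" "l * s ^ 2 \<le> 1 - l" shows "M3 l s \<ge> 0"
  using assms qq_pos[of l s] unfolding M3_def by (auto intro!: divide_nonneg_pos mult_nonneg_nonneg)

lemma M3_nonpos: assumes "0<l" "l<1" "0<s" "l * s ^ 2 \<ge> 1 - l" shows "M3 l s \<le> 0"
  using assms qq_pos[of l s] unfolding M3_def
  by (intro divide_nonpos_pos mult_nonneg_nonpos) auto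

lemma two_step:
  fixes f f1 f2 :: "real \<Rightarrow> real"
  assumes "a \<le> b" "\<And>x. x\<in>{a..b} \<Longrightarrow> (f has_real_derivative f1 x) (at x)"
    "\<And>x. x\<in>{a..b} \<Longrightarrow> (f1 has_real_derivative f2 x) (at x)"
    "\<And>x. x\<in>{a..b} \<Longrightarrow> f2 x \<ge> 0" "f a \<ge> 0" "f1 a \<ge> 0"
  shows "f b \<ge> 0"
proof -
  have "f1 x \<ge> 0" if "x \<in> {a..b}" for x
  proof -
    have "f1 a \<le> f1 x"
      by (rule deriv_nonneg_imp_mono[of a x f1 f2]) (use assms that in auto)
    then show ?thesis using assms by simp
  qed
  then have "f a \<le> f b"
    by (intro deriv_nonneg_imp_mono[of a b f f1]) (use assms in auto)
  then show ?thesis using assms by simp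
qed



lemma L_sym: "L_bound (1 - l) = L_bound l"
  unfolding L_bound_def by (simp add: min.commute)

lemma U_sym: assumes "0<l" "l<1" shows "U_bound (1 - l) = U_bound l"
proof (cases "l = 1/2")
  case True then show ?thesis by (simp only: True) simp
next
  case False
  then have a: "1 - l \<noteq> 1/2" by simp
  have "ln (l / (1 - l)) = - ln ((1 - l) / l)" using assms by (simp add: ln_div)
  moreover have "1 - 2 * (1 - l) = - (1 - 2 * l)" by simp
  ultimately show ?thesis using False a unfolding U_bound_def
    by (simp add: divide_simps algebra_simps)
qed

lemma L_le: assumes "0<l" "l<1" shows "L_bound l \<le> 4 * l * (1 - l)" "L_bound l \<le> 2 * eta l"
proof -
  show "L_bound l \<le> 2 * eta l" unfolding L_bound_def by simp
  show "L_bound l \<le> 4 * l * (1 - l)"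
  proof (cases "l \<le> 1/2")
    case True
    have "ln (1 / (1 - l)) \<le> 1 / (1 - l) - 1" using assms by (intro ln_le_minus_one) simp
    moreover have "ln (1 / (1 - l)) = - ln (1 - l)" using assms by (simp add: ln_div)
    moreover have "1 / (1 - l) - 1 \<le> 2 * l" using assms True by (simp add: field_simps)
    ultimately have "- ln (1 - l) \<le> 2 * l" by linarith
    then have "(1 - l) * (- ln (1 - l)) \<le> (1 - l) * (2 * l)" using assms by (intro mult_left_mono) auto
    then have "eta (1 - l) \<le> 2 * l * (1 - l)" unfolding eta_def by (simp add: algebra_simps)
    then show ?thesis unfolding L_bound_def by linarith
  next
    case False
    have "ln (1 / l) \<le> 1 / l - 1" using assms by (intro ln_le_minus_one) simp
    moreover have "ln (1 / l) = - ln l" using assms by (simp add: ln_div)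
    moreover have "1 / l - 1 \<le> 2 * (1 - l)"
    proof -
      have "0 \<le> (2 * l - 1) * (1 - l)" using assms False by (intro mult_nonneg_nonneg) auto
      then show ?thesis using assms by (simp add: field_simps algebra_simps)
    qed
    ultimately have "- ln l \<le> 2 * (1 - l)" by linarith
    then have "l * (- ln l) \<le> l * (2 * (1 - l))" using assms by (intro mult_left_mono) auto
    then have "eta l \<le> 2 * l * (1 - l)" unfolding eta_def by (simp add: algebra_simps)
    then show ?thesis unfolding L_bound_def by linarith
  qed
qed

lemma U_ge_half: assumes "0<l" "l<1/2" shows "4 * l * (1 - l) \<le> U_bound l"
proof -
  define g where "g x = ln (1 - x) - ln x + 4 * x" for x :: real
  have d: "(g has_real_derivative (- 1 / (1 - x) - 1 / x + 4)) (at x)" if "x \<in> {l..1/2}" for x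
    using that assms unfolding g_def[abs_def]
    by (auto intro!: derivative_eq_intros)
  have nn: "- 1 / (1 - x) - 1 / x + 4 \<le> 0" if "x \<in> {l..1/2}" for x
  proof -
    have x: "0 < x" "x < 1" using that assms by auto
    have "4 * x * (1 - x) = 1 - (2 * x - 1) ^ 2" by (simp add: power2_eq_square algebra_simps)
    then have "4 * x * (1 - x) \<le> 1" by simp
    then show ?thesis using x by (simp add: field_simps)
  qed
  have "g (1/2) \<le> g l" by (rule deriv_nonpos_imp_antimono[OF d nn]) (use assms in auto)
  then have "2 \<le> ln (1 - l) - ln l + 4 * l" unfolding g_def by simp
  then have h: "2 * (1 - 2 * l) \<le> ln ((1 - l) / l)" using assms by (simp add: ln_div)
  have c: "0 \<le> 2 * l * (1 - l) / (1 - 2 * l)" using assms by simp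
  have "4 * l * (1 - l) = 2 * l * (1 - l) / (1 - 2 * l) * (2 * (1 - 2 * l))" using assms by (simp add: field_simps)
  also have "\<dots> \<le> 2 * l * (1 - l) / (1 - 2 * l) * ln ((1 - l) / l)" by (rule mult_left_mono[OF h c])
  finally show ?thesis using assms unfolding U_bound_def by simp
qed

lemma U_ge: assumes "0<l" "l<1" shows "4 * l * (1 - l) \<le> U_bound l"
proof -
  consider "l < 1/2" | "l = 1/2" | "l > 1/2" by linarith
  then show ?thesis
  proof cases
    case 1 then show ?thesis using U_ge_half assms by simp
  next
    case 2 then show ?thesis unfolding U_bound_def by (simp only: 2) simp
  next
    case 3
    then have "4 * (1 - l) * (1 - (1 - l)) \<le> U_bound (1 - l)" using U_ge_half[of "1 - l"] assms by simp
    then show ?thesis using U_sym[OF assms] by (simp add: mult_ac)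
  qed
qed



lemma M2_mono_up: assumes "0<l" "l<1" "1 \<le> s" "l * s ^ 2 \<le> 1 - l" shows "M2 l 1 \<le> M2 l s"
proof (rule deriv_nonneg_imp_mono[of 1 s "M2 l" "M3 l"])
  fix x assume x: "x \<in> {1..s}"
  show "(M2 l has_real_derivative M3 l x) (at x)" using x assms by (intro dM2) auto
  have "x ^ 2 \<le> s ^ 2" using x by (intro power_mono) auto
  then have "l * x ^ 2 \<le> l * s ^ 2" using assms by (intro mult_left_mono) auto
  then have "l * x ^ 2 \<le> 1 - l" using assms by linarith
  then show "0 \<le> M3 l x" using x assms by (intro M3_nonneg) auto
qed (use assms in auto)

lemma M2_mono_down: assumes "0<l" "l<1" "1 \<le> s" "1 - l \<le> l" shows "M2 l s \<le> M2 l 1"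
proof (rule deriv_nonpos_imp_antimono[of 1 s "M2 l" "M3 l"])
  fix x assume x: "x \<in> {1..s}"
  show "(M2 l has_real_derivative M3 l x) (at x)" using x assms by (intro dM2) auto
  have "1 \<le> x ^ 2" using x by simp
  then have "l \<le> l * x ^ 2" using assms by simp
  then have "1 - l \<le> l * x ^ 2" using assms by linarith
  then show "M3 l x \<le> 0" using x assms by (intro M3_nonpos) auto
qed (use assms in auto)

lemma M2_ge_eta: assumes "0<l" "l<1" "0 < s" "1 - l \<le> l * s ^ 2" shows "2 * eta l \<le> M2 l s"
proof -
  define q where "q = qq l s"
  have q: "0 < q" using qq_pos assms q_def by auto
  define y where "y = l * s ^ 2 / q"
  have y1: "y = 1 - (1 - l) / q" using q unfolding y_def q_def qq_def by (simp add: field_simps)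
  have ypos: "0 < y" using assms q unfolding y_def by simp
  have yhalf: "1/2 \<le> y" using assms q unfolding y_def q_def qq_def by (simp add: field_simps)
  have yle: "y \<le> 1" using y1 q assms by simp
  have "ln (1 / y) \<le> 1 / y - 1" using ypos by (intro ln_le_minus_one) simp
  then have lny: "1 - 1 / y \<le> ln y" using ypos by (simp add: ln_div)
  have "0 \<le> (2 * y - 1) * (1 - y) / y" using yhalf yle ypos by simp
  then have "0 \<le> 1 - 1 / y + 2 * (1 - y)" using ypos by (simp add: field_simps)
  with lny have key: "0 \<le> ln y + 2 * (1 - l) / q" using y1 by simp
  have e: "ln l + 2 * ln s - ln q = ln y" using assms q unfolding y_def
    by (simp add: ln_div ln_mult ln_realpow)
  have "M2 l s - 2 * eta l = 2 * l * (ln l + 2 * ln s - ln q) + 2 * l * (2 * (1 - l) / q)"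
    unfolding M2_def eta_def q_def by (simp add: algebra_simps)
  then have "M2 l s - 2 * eta l = 2 * l * (ln y + 2 * (1 - l) / q)"
    unfolding e by (simp add: algebra_simps)
  moreover have "0 \<le> 2 * l * (ln y + 2 * (1 - l) / q)" using key assms by simp
  ultimately show ?thesis by simp
qed

lemma M2_ge_L: assumes "0<l" "l<1" "1 \<le> s" shows "L_bound l \<le> M2 l s"
proof (cases "l * s ^ 2 \<le> 1 - l")
  case True
  then have "M2 l 1 \<le> M2 l s" using M2_mono_up assms by auto
  then show ?thesis using L_le[OF assms(1,2)] vals(4)[of l] by simp
next
  case False
  then have "2 * eta l \<le> M2 l s" using assms by (intro M2_ge_eta) auto
  then show ?thesis using L_le[OF assms(1,2)] by simp
qed

lemma lower_main: assumes "0<l" "l<1" "1 \<le> s" shows "L_bound l * (s - 1) ^ 2 \<le> 2 * MM l s"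
proof -
  let ?L = "L_bound l"
  have "0 \<le> (\<lambda>x. 2 * MM l x - ?L * (x - 1) ^ 2) s"
  proof (rule two_step[of 1 s _ "\<lambda>x. 2 * M1 l x - 2 * ?L * (x - 1)" "\<lambda>x. 2 * M2 l x - 2 * ?L"])
    fix x assume x: "x \<in> {1..s}"
    then have "0 < x" by auto
    show "((\<lambda>x. 2 * MM l x - ?L * (x - 1) ^ 2) has_real_derivative 2 * M1 l x - 2 * ?L * (x - 1)) (at x)"
      using \<open>0 < x\<close> assms by (auto intro!: derivative_eq_intros dM)
    show "((\<lambda>x. 2 * M1 l x - 2 * ?L * (x - 1)) has_real_derivative 2 * M2 l x - 2 * ?L) (at x)"
      using \<open>0 < x\<close> assms by (auto intro!: derivative_eq_intros dM1)
    show "0 \<le> 2 * M2 l x - 2 * ?L" using M2_ge_L[of l x] x assms by auto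
  qed (use assms vals in auto)
  then show ?thesis by simp
qed

lemma upper_big: assumes "0<l" "l<1" "1 \<le> s" "1/2 \<le> l" shows "2 * MM l s \<le> U_bound l * (s - 1) ^ 2"
proof -
  let ?U = "U_bound l"
  have "0 \<le> (\<lambda>x. ?U * (x - 1) ^ 2 - 2 * MM l x) s"
  proof (rule two_step[of 1 s _ "\<lambda>x. 2 * ?U * (x - 1) - 2 * M1 l x" "\<lambda>x. 2 * ?U - 2 * M2 l x"])
    fix x assume x: "x \<in> {1..s}"
    then have "0 < x" by auto
    show "((\<lambda>x. ?U * (x - 1) ^ 2 - 2 * MM l x) has_real_derivative 2 * ?U * (x - 1) - 2 * M1 l x) (at x)"
      using \<open>0 < x\<close> assms by (auto intro!: derivative_eq_intros dM)
    show "((\<lambda>x. 2 * ?U * (x - 1) - 2 * M1 l x) has_real_derivative 2 * ?U - 2 * M2 l x) (at x)"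
      using \<open>0 < x\<close> assms by (auto intro!: derivative_eq_intros dM1)
    have "M2 l x \<le> M2 l 1" using x assms by (intro M2_mono_down) auto
    then show "0 \<le> 2 * ?U - 2 * M2 l x" using U_ge[OF assms(1,2)] vals(4)[of l] by simp
  qed (use assms vals in auto)
  then show ?thesis by simp
qed



lemma alg_aux: fixes a b d :: real assumes "d \<noteq> 0"
  shows "(2 * a * d ^ 2 - 2 * b * (2 * d)) / (d ^ 2) ^ 2 = 2 * (d * a - 2 * b) / d ^ 3"
  using assms by (simp add: field_simps power2_eq_square power3_eq_cube)

definition KK where "KK l s = 2 * MM l s / (s - 1) ^ 2"

lemma dK: assumes "0<l" "l<1" "1<s" shows "(KK l has_real_derivative 2 * NN l s / (s - 1) ^ 3) (at s)"
proof -
  have ne: "s - 1 \<noteq> 0" using assms by simp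
  have "((\<lambda>s. 2 * MM l s / (s - 1) ^ 2) has_real_derivative
      (2 * M1 l s * (s - 1) ^ 2 - 2 * MM l s * (2 * (s - 1))) / ((s - 1) ^ 2) ^ 2) (at s)"
    using assms ne by (auto intro!: derivative_eq_intros dM simp: power2_eq_square)
  moreover have "(2 * M1 l s * (s - 1) ^ 2 - 2 * MM l s * (2 * (s - 1))) / ((s - 1) ^ 2) ^ 2
      = 2 * NN l s / (s - 1) ^ 3"
    using alg_aux[OF ne, of "M1 l s" "MM l s"] unfolding NN_def by simp
  ultimately show ?thesis unfolding KK_def[abs_def] by simp
qed

lemma small_case:
  assumes "0<l" "l<1/2" "1 < s"
  shows "KK l s \<le> U_bound l"
proof -
  have l1: "l < 1" using assms by simp
  define r where "r = (1 - l) / l"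
  define s0 where "s0 = sqrt r"
  have r1: "1 < r" using assms unfolding r_def by (simp add: field_simps)
  have s0sq: "s0 ^ 2 = r" using r1 unfolding s0_def by simp
  have s01: "1 < s0" using r1 unfolding s0_def by simp
  have "s0 * 1 < s0 * s0" using s01 by (intro mult_strict_left_mono) auto
  then have s0r: "s0 < r" using s0sq by (simp add: power2_eq_square)
  have lr: "l * r = 1 - l" using assms unfolding r_def by simp
  have qr: "qq l r = r" using assms unfolding qq_def r_def by (simp add: field_simps power2_eq_square)
  have "NN l r = 2 * r * ln r * (1 - l - l * r)"
    unfolding NN_def M1_def MM_def qr by (simp add: algebra_simps power2_eq_square)
  then have NNr: "NN l r = 0" using lr by simp
  have KKr: "KK l r = U_bound l"
  proof -
    have "KK l r = 2 * (2 * l * r ^ 2 * ln r - r * ln r) / (r - 1) ^ 2"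
      unfolding KK_def MM_def qr by simp
    also have "\<dots> = 2 * (r * (1 - 2 * l) * ln r) / ((1 - 2 * l) / l) ^ 2"
    proof -
      have "l * r ^ 2 = (l * r) * r" by (simp add: power2_eq_square)
      then have e2: "l * r ^ 2 = (1 - l) * r" using lr by simp
      have "2 * l * r ^ 2 * ln r - r * ln r = 2 * (l * r ^ 2) * ln r - r * ln r" by simp
      also have "\<dots> = r * (1 - 2 * l) * ln r" unfolding e2 by (simp add: algebra_simps)
      finally have "2 * l * r ^ 2 * ln r - r * ln r = r * (1 - 2 * l) * ln r" .
      moreover have "r - 1 = (1 - 2 * l) / l" unfolding r_def using assms by (simp add: field_simps)
      ultimately show ?thesis by simp
    qed
    also have "\<dots> = 2 * l * (1 - l) / (1 - 2 * l) * ln ((1 - l) / l)"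
    proof -
      have c: "1 - 2 * l \<noteq> 0" "l \<noteq> 0" using assms by auto
      have g: "\<And>c L. c \<noteq> 0 \<Longrightarrow> 2 * (r * c * L) / (c / l) ^ 2 = 2 * l * (l * r) / c * L"
        using c(2) by (simp add: field_simps power2_eq_square)
      show ?thesis using g[OF c(1), of "ln r"] lr unfolding r_def by simp
    qed
    finally show ?thesis using assms unfolding U_bound_def by simp
  qed
  have N1: "0 \<le> NN l x" if "1 \<le> x" "x \<le> s0" for x
  proof (rule two_step[of 1 x "NN l" "N1 l" "N2 l"])
    fix y assume y: "y \<in> {1..x}"
    show "(NN l has_real_derivative N1 l y) (at y)" using y assms l1 by (intro dN) auto
    show "(N1 l has_real_derivative N2 l y) (at y)" using y assms l1 by (intro dN1) auto
    have "y ^ 2 \<le> s0 ^ 2" using y that by (intro power_mono) auto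
    then have "l * y ^ 2 \<le> l * r" using assms s0sq by (intro mult_left_mono) auto
    then have "l * y ^ 2 \<le> 1 - l" using lr by simp
    then have "0 \<le> M3 l y" using y assms l1 by (intro M3_nonneg) auto
    then show "0 \<le> N2 l y" using y unfolding N2_def by simp
  qed (use that vals in auto)
  have conc: "concave_on {s0..} (NN l)"
  proof (rule f''_le0_imp_concave[of _ _ "N1 l" "N2 l"])
    fix y assume y: "y \<in> {s0..}"
    show "(NN l has_real_derivative N1 l y) (at y)" using y s01 assms l1 by (intro dN) auto
    show "(N1 l has_real_derivative N2 l y) (at y)" using y s01 assms l1 by (intro dN1) auto
    have "s0 ^ 2 \<le> y ^ 2" using y s01 by (intro power_mono) auto
    then have "l * r \<le> l * y ^ 2" using assms s0sq by (intro mult_left_mono) auto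
    then have "1 - l \<le> l * y ^ 2" using lr by simp
    then have "M3 l y \<le> 0" using y s01 assms l1 by (intro M3_nonpos) auto
    then show "N2 l y \<le> 0" using y s01 unfolding N2_def by (simp add: mult_nonneg_nonpos)
  qed simp
  have Ns0: "0 \<le> NN l s0" using N1 s01 by simp
  have N2a: "0 \<le> NN l x" if "s0 \<le> x" "x \<le> r" for x
  proof -
    define t where "t = (x - s0) / (r - s0)"
    have t: "0 \<le> t" "t \<le> 1" using that s0r unfolding t_def by (auto simp: field_simps)
    have "(1 - t) * NN l s0 + t * NN l r \<le> NN l ((1 - t) *\<^sub>R s0 + t *\<^sub>R r)"
      by (rule concave_onD[OF conc t]) (use s0r in auto)
    moreover have "(1 - t) *\<^sub>R s0 + t *\<^sub>R r = x"
    proof -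
      have "t * (r - s0) = x - s0" using s0r unfolding t_def by simp
      moreover have "(1 - t) *\<^sub>R s0 + t *\<^sub>R r = s0 + t * (r - s0)" by (simp add: algebra_simps)
      ultimately show ?thesis by simp
    qed
    moreover have "0 \<le> (1 - t) * NN l s0" using t Ns0 by simp
    ultimately show ?thesis using NNr by simp
  qed
  have N2b: "NN l x \<le> 0" if "r \<le> x" for x
  proof (cases "x = r")
    case True then show ?thesis using NNr by simp
  next
    case False
    then have xr: "r < x" using that by simp
    define t where "t = (r - s0) / (x - s0)"
    have t: "0 \<le> t" "t \<le> 1" "0 < t" using xr s0r unfolding t_def by (auto simp: field_simps)
    have "(1 - t) * NN l s0 + t * NN l x \<le> NN l ((1 - t) *\<^sub>R s0 + t *\<^sub>R x)"
      by (rule concave_onD[OF conc t(1,2)]) (use s0r xr in auto)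
    moreover have "(1 - t) *\<^sub>R s0 + t *\<^sub>R x = r"
    proof -
      have "t * (x - s0) = r - s0" using s0r xr unfolding t_def by simp
      moreover have "(1 - t) *\<^sub>R s0 + t *\<^sub>R x = s0 + t * (x - s0)" by (simp add: algebra_simps)
      ultimately show ?thesis by simp
    qed
    moreover have "0 \<le> (1 - t) * NN l s0" using t Ns0 by simp
    ultimately have "t * NN l x \<le> 0" using NNr by simp
    then show ?thesis using t(3) by (simp add: mult_le_0_iff)
  qed
  have Npos: "0 \<le> NN l x" if "1 \<le> x" "x \<le> r" for x
    using N1 N2a that by (cases "x \<le> s0") auto
  show ?thesis
  proof (cases "s \<le> r")
    case True
    have "KK l s \<le> KK l r"
    proof (rule deriv_nonneg_imp_mono[of s r "KK l" "\<lambda>x. 2 * NN l x / (x - 1) ^ 3"])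
      fix x assume x: "x \<in> {s..r}"
      show "(KK l has_real_derivative 2 * NN l x / (x - 1) ^ 3) (at x)" using x assms l1 by (intro dK) auto
      show "0 \<le> 2 * NN l x / (x - 1) ^ 3" using x assms Npos[of x] by simp
    qed (use True in auto)
    then show ?thesis using KKr by simp
  next
    case False
    have "KK l s \<le> KK l r"
    proof (rule deriv_nonpos_imp_antimono[of r s "KK l" "\<lambda>x. 2 * NN l x / (x - 1) ^ 3"])
      fix x assume x: "x \<in> {r..s}"
      show "(KK l has_real_derivative 2 * NN l x / (x - 1) ^ 3) (at x)" using x r1 assms l1 by (intro dK) auto
      have "1 < x" using x r1 by simp
      then show "2 * NN l x / (x - 1) ^ 3 \<le> 0" using x N2b[of x] by (simp add: divide_nonpos_pos)
    qed (use False in auto)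
    then show ?thesis using KKr by simp
  qed
qed



lemma bounds_s: assumes "0<l" "l<1" "1<s"
  shows "L_bound l * (s - 1) ^ 2 \<le> 2 * MM l s \<and> 2 * MM l s \<le> U_bound l * (s - 1) ^ 2"
proof
  show "L_bound l * (s - 1) ^ 2 \<le> 2 * MM l s" using lower_main assms by simp
  show "2 * MM l s \<le> U_bound l * (s - 1) ^ 2"
  proof (cases "1/2 \<le> l")
    case True then show ?thesis using upper_big assms by simp
  next
    case False
    then have "KK l s \<le> U_bound l" using small_case assms by simp
    moreover have "0 < (s - 1) ^ 2" using assms by simp
    ultimately show ?thesis unfolding KK_def by (simp add: divide_le_eq)
  qed
qed

lemma kappa_sq: assumes "0 < s" shows "kappa l (s ^ 2) = 2 * MM l s / (s - 1) ^ 2"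
proof -
  have m: "m_fun l (s ^ 2) = MM l s"
    unfolding m_fun_def MM_def qq_def using assms by (simp add: ln_realpow)
  have h: "hel (s ^ 2) = (s - 1) ^ 2 / 2" unfolding hel_def using assms by simp
  show ?thesis unfolding kappa_def m h by simp
qed

lemma alg2: fixes a L Q LQ s :: real assumes "s \<noteq> 0"
  shows "2 * a * (1 / s) ^ 2 * (- L) - Q / s ^ 2 * (LQ - 2 * L) = (2 * L * (Q - a) - Q * LQ) / s ^ 2"
  using assms by (simp add: field_simps power2_eq_square)

lemma MM_inv: assumes "0<l" "l<1" "0<s" shows "MM (1 - l) (1 / s) = MM l s / s ^ 2"
proof -
  have q: "0 < qq l s" using qq_pos assms by auto
  have e1: "qq (1 - l) (1 / s) = qq l s / s ^ 2" unfolding qq_def using assms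
    by (simp add: field_simps power2_eq_square)
  have e2: "ln (qq l s / s ^ 2) = ln (qq l s) - 2 * ln s" using q assms by (simp add: ln_div ln_realpow)
  have e3: "ln (1 / s) = - ln s" using assms by (simp add: ln_div)
  have A: "MM (1 - l) (1 / s) = 2 * (1 - l) * (1 / s) ^ 2 * (- ln s) - qq l s / s ^ 2 * (ln (qq l s) - 2 * ln s)"
    unfolding MM_def e1 e2 e3 by (rule refl)
  have C: "qq l s - (1 - l) = l * s ^ 2" unfolding qq_def by simp
  have s0: "s \<noteq> 0" using assms by simp
  have "MM (1 - l) (1 / s) = (2 * ln s * (qq l s - (1 - l)) - qq l s * ln (qq l s)) / s ^ 2"
    unfolding A by (rule alg2[OF s0])
  also have "\<dots> = (2 * ln s * (l * s ^ 2) - qq l s * ln (qq l s)) / s ^ 2" unfolding C ..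
  also have "\<dots> = MM l s / s ^ 2" unfolding MM_def by (simp only: mult_ac)
  finally show ?thesis .
qed

lemma part_i: assumes "0<l" "l<1" "0<t" shows "kappa l t = kappa (1 - l) (1 / t)"
proof -
  define s where "s = sqrt t"
  have s: "0 < s" "t = s ^ 2" using assms unfolding s_def by auto
  have "1 / t = (1 / s) ^ 2" using s by (simp add: power_divide)
  then have "kappa (1 - l) (1 / t) = 2 * MM (1 - l) (1 / s) / (1 / s - 1) ^ 2"
    using kappa_sq[of "1 / s" "1 - l"] s by simp
  also have "\<dots> = 2 * (MM l s / s ^ 2) / ((s - 1) ^ 2 / s ^ 2)"
  proof -
    have "(1 / s - 1) ^ 2 = (s - 1) ^ 2 / s ^ 2" using s by (simp add: field_simps power2_eq_square)
    then show ?thesis using MM_inv assms s by simp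
  qed
  also have "\<dots> = 2 * MM l s / (s - 1) ^ 2"
  proof -
    have c: "s ^ 2 \<noteq> 0" using s by simp
    have "\<And>a b. 2 * (a / s ^ 2) / (b / s ^ 2) = 2 * a / b" using c by (simp add: divide_simps)
    then show ?thesis by blast
  qed
  also have "\<dots> = kappa l t" using kappa_sq[of s l] s by simp
  finally show ?thesis by simp
qed

lemma gt1: assumes "0<l" "l<1" "1<t" shows "L_bound l \<le> kappa l t \<and> kappa l t \<le> U_bound l"
proof -
  define s where "s = sqrt t"
  have s: "1 < s" "t = s ^ 2" using assms unfolding s_def by auto
  have k: "kappa l t = 2 * MM l s / (s - 1) ^ 2" using kappa_sq[of s l] s by simp
  have p: "0 < (s - 1) ^ 2" using s by simp
  show ?thesis using bounds_s[OF assms(1,2) s(1)] p unfolding k by (simp add: divide_le_eq le_divide_eq)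
qed

theorem lemma2:
  fixes l t :: real
  assumes "0 < l" "l < 1" "0 < t" "t \<noteq> 1"
  shows "kappa l t = kappa (1 - l) (1 / t)
    \<and> L_bound l \<le> kappa l t \<and> kappa l t \<le> U_bound l"
proof -
  have i: "kappa l t = kappa (1 - l) (1 / t)" by (rule part_i[OF assms(1-3)])
  show ?thesis
  proof (cases "1 < t")
    case True then show ?thesis using i gt1[OF assms(1,2) True] by simp
  next
    case False
    then have "t < 1" using assms by simp
    then have "1 < 1 / t" using assms by simp
    then have "L_bound (1 - l) \<le> kappa (1 - l) (1 / t) \<and> kappa (1 - l) (1 / t) \<le> U_bound (1 - l)"
      using gt1[of "1 - l" "1 / t"] assms by simp
    then show ?thesis using i L_sym[of l] U_sym[OF assms(1,2)] by simp
  qed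
qed

end
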